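(* Let $n\ge0$, let $\chi$ be a primitive Dirichlet character of conductor $q$ with $\gcd(q,N)=1$, let $\phi$ be a test function as in the context, and let $x>10^6$. Then $$\Big|\sum_{j\ge1}\Lambda_{\mathrm{Sym}^nf\otimes\chi}(j)\phi_x(j)-\sum_{p\nmid N}U_n(\cos\theta_p)\log(p)\chi(p)\phi_x(p)\Big|\le 9.06(n+1)\sqrt{x}+2(n+1)\log N,$$ where the second sum is over primes $p$.
   Context: $f\in S_k^{\mathrm{new}}(\Gamma_0(N))$ is a newform of even weight $k$ and squarefree level $N$. For each prime $p\nmid N$, $\theta_p\in[0,\pi]$ is defined by $a_f(p)=2p^{(k-1)/2}\cos\theta_p$. $U_n$ is the Chebyshev polynomial of the second kind: $U_n(\cos\theta)=\sin((n+1)\theta)/\sin\theta$. Twisted symmetric power $L$-function (for $\mathrm{Re}(s)>1$): $$L(s,\mathrm{Sym}^n f\otimes\chi)=\prod_{p\mid N}\big(1-(-\lambda_p p^{-1/2})^n\chi(p)p^{-s}\big)^{-1}\prod_{p\nmid N}\prod_{j=0}^{n}\big(1-e^{i(2j-n)\theta_p}\chi(p)p^{-s}\big)^{-1},$$ where $\lambda_p\in\{\pm1\}$ is the eigenvalue of the Atkin–Lehner operator $W(p)$ on $f$. The numbers $\Lambda_{\mathrm{Sym}^nf\otimes\chi}(j)$ are defined by $-\frac{L'}{L}(s,\mathrm{Sym}^nf\otimes\chi)=\sum_{j\ge1}\Lambda_{\mathrm{Sym}^nf\otimes\chi}(j)j^{-s}$ for $\mathrm{Re}(s)>1$. Test function: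 $\phi:\mathbb R\to\mathbb R$ is infinitely differentiable, $0\le\phi(t)\le 2$, with support contained in $[1/2,5/2]$; $\phi_x(t)=\phi(t/x)$. *)

theory Defs
  imports "HOL-Analysis.Analysis" "HOL-Computational_Algebra.Squarefree"
begin

text \<open>Chebyshev polynomials of the second kind, U_n(cos t) = sin((n+1)t)/sin t.\<close>
fun chebyU :: "nat \<Rightarrow> real \<Rightarrow> real" where
  "chebyU 0 y = 1"
| "chebyU (Suc 0) y = 2 * y"
| "chebyU (Suc (Suc n)) y = 2 * y * chebyU (Suc n) y - chebyU n y"

definition dirichlet_character :: "nat \<Rightarrow> (nat \<Rightarrow> complex) \<Rightarrow> bool" where
  "dirichlet_character q chi \<longleftrightarrow> q > 0 \<and>
     (\<forall>a. chi (a + q) = chi a) \<and>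
     (\<forall>a b. chi (a * b) = chi a * chi b) \<and>
     chi 1 = 1 \<and>
     (\<forall>a. chi a = 0 \<longleftrightarrow> \<not> coprime a q)"

text \<open>Primitive character of conductor q: not induced by a character of any
  smaller modulus d dividing q, i.e. for each proper divisor d of q there is
  a unit a modulo q with a = 1 mod d and chi(a) different from 1.\<close>
definition primitive_character :: "nat \<Rightarrow> (nat \<Rightarrow> complex) \<Rightarrow> bool" where
  "primitive_character q chi \<longleftrightarrow> dirichlet_character q chi \<and>
     (\<forall>d. d dvd q \<and> d < q \<longrightarrow>
        (\<exists>a. coprime a q \<and> a mod d = 1 mod d \<and> chi a \<noteq> 1))"

definition smooth_fun :: "(real \<Rightarrow> real) \<Rightarrow> bool" where
  "smooth_fun \<phi> \<longleftrightarrow> (\<exists>D :: nat \<Rightarrow> real \<Rightarrow> real. D 0 = \<phi> \<and>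
     (\<forall>k t. (D k has_real_derivative D (Suc k) t) (at t)))"

definition test_function :: "(real \<Rightarrow> real) \<Rightarrow> bool" where
  "test_function \<phi> \<longleftrightarrow> smooth_fun \<phi> \<and> (\<forall>t. 0 \<le> \<phi> t \<and> \<phi> t \<le> 2) \<and>
     (\<forall>t. t \<notin> {1/2..5/2} \<longrightarrow> \<phi> t = 0)"

text \<open>Roots of the local Euler factor of L(s, Sym^n f \<otimes> chi) at a prime p:
  for p dividing N the single root (-lambda_p p^(-1/2))^n chi(p),
  for p not dividing N the roots e^(i(2j-n)theta_p) chi(p), j = 0..n.\<close>

text \<open>Coefficients of -L'/L(s, Sym^n f \<otimes> chi) = sum_j Lambda(j) j^(-s):
  Lambda(p^m) = log p * (sum of m-th powers of the local roots at p), m \<ge> 1,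
  and Lambda(j) = 0 if j is not a prime power.\<close>
definition sym_Lambda ::
  "nat \<Rightarrow> (nat \<Rightarrow> real) \<Rightarrow> (nat \<Rightarrow> real) \<Rightarrow> nat \<Rightarrow> (nat \<Rightarrow> complex) \<Rightarrow> nat \<Rightarrow> complex" where
  "sym_Lambda N \<theta> lam n chi j =
     (if \<exists>p m. prime p \<and> m \<ge> 1 \<and> j = p ^ m then
        (let p = (THE p. prime p \<and> (\<exists>m\<ge>1. j = p ^ m));
             m = (THE m. m \<ge> 1 \<and> j = p ^ m)
         in complex_of_real (ln (real p)) *
           (if p dvd N then
              ((complex_of_real ((- lam p / sqrt (real p)) ^ n)) * chi p) ^ m
            else
              (\<Sum>i\<le>n. (cis ((2 * real i - real n) * \<theta> p) * chi p) ^ m)))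
      else 0)"

end

theory Submission
  imports Defs
begin


lemma sum_two: "(\<Sum>k\<in>{m, m+1::nat}. f k) = f m + (f (m+1) :: nat)" by simp

lemma central_binom_odd_le: "(2*m+1 choose m) \<le> 4^m"
proof -
  have h: "(2*m+1 choose (m+1)) = (2*m+1 choose m)"
    using binomial_symmetric[of m "2*m+1"] by simp
  have "(\<Sum>k\<in>{m, m+1}. (2*m+1) choose k) \<le> (\<Sum>k\<le>2*m+1. (2*m+1) choose k)"
    by (rule sum_mono2) auto
  then have "(2*m+1 choose m) + (2*m+1 choose m) \<le> 2^(2*m+1)"
    by (simp only: choose_row_sum sum_two h)
  then show ?thesis by (simp add: power_mult)
qed

lemma ln4_le: "ln (4::real) \<le> 1.43"
proof -
  obtain t where "exp (1.43::real) = (\<Sum>m<6. 1.43 ^ m / fact m) + exp t / fact 6 * 1.43 ^ 6"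
    using Maclaurin_exp_le[of "1.43::real" 6] by blast
  moreover have "(\<Sum>m<6. (1.43::real) ^ m / fact m) \<ge> 4"
    by (simp add: lessThan_nat_numeral fact_numeral eval_nat_numeral power_divide)
  moreover have "exp t / fact 6 * (1.43::real) ^ 6 \<ge> 0" by simp
  ultimately have "exp (1.43::real) \<ge> 4" by linarith
  then show ?thesis by (metis exp_gt_zero ln_exp ln_le_cancel_iff zero_less_numeral)
qed


lemma primes_prod_dvd:
  fixes c :: nat
  assumes "finite A" "\<And>p. p \<in> A \<Longrightarrow> prime p \<and> p dvd c"
  shows "\<Prod>A dvd c"
  using assms
proof (induction A rule: finite_induct)
  case empty then show ?case by simp
next
  case (insert p A)
  have pr: "prime p" "p dvd c" using insert.prems by auto
  have IH: "\<Prod>A dvd c" using insert by auto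
  have "\<not> p dvd \<Prod>A"
  proof
    assume "p dvd \<Prod>A"
    then obtain q where "q \<in> A" "p dvd q" using prime_dvd_prod_iff[OF insert.hyps(1) pr(1)] by auto
    then have "p = q" using insert.prems pr by (metis insert_iff primes_dvd_imp_eq)
    then show False using \<open>q \<in> A\<close> insert.hyps(2) by simp
  qed
  then have "coprime p (\<Prod>A)" using pr(1) prime_imp_coprime by blast
  then have "p * \<Prod>A dvd c" using pr(2) IH divides_mult by blast
  then show ?case using insert.hyps by simp
qed

lemma primorial_le: "\<Prod>{p::nat. prime p \<and> p \<le> n} \<le> 4^n"
proof (induction n rule: less_induct)
  case (less n)
  show ?case
  proof (cases "n \<le> 2")
    case True
    show ?thesis
    proof (cases "n \<le> 1")
      case True
      have "False" if "prime p" "p \<le> n" for p::nat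
        using prime_gt_1_nat[of p] that True by linarith
      then have E: "{p::nat. prime p \<and> p \<le> n} = {}" by blast
      show ?thesis unfolding E by simp
    next
      case False
      then have n2: "n = 2" using \<open>n \<le> 2\<close> by simp
      have "p = 2" if "prime p" "p \<le> 2" for p::nat using that prime_ge_2_nat[of p] by linarith
      then have E: "{p::nat. prime p \<and> p \<le> 2} = {2}" by auto
      show ?thesis unfolding n2 E by simp
    qed
  next
    case False
    show ?thesis
    proof (cases "even n")
      case True
      have "\<not> prime n" using False True prime_odd_nat[of n] by linarith
      then have "{p::nat. prime p \<and> p \<le> n} = {p. prime p \<and> p \<le> n - 1}"
        by (auto simp: le_eq_less_or_eq)
      also have "\<Prod>\<dots> \<le> 4^(n-1)" using less[of "n-1"] False by simp
      also have "\<dots> \<le> 4^n" by (rule power_increasing) auto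
      finally show ?thesis .
    next
      case odd: False
      then obtain m where n: "n = 2*m+1" using oddE by blast
      have m1: "m \<ge> 1" using False n by simp
      define S1 where "S1 = {p::nat. prime p \<and> p \<le> m+1}"
      define S2 where "S2 = {p::nat. prime p \<and> m+1 < p \<and> p \<le> 2*m+1}"
      have fin1: "finite S1" and fin2: "finite S2" unfolding S1_def S2_def by auto
      have split: "{p::nat. prime p \<and> p \<le> n} = S1 \<union> S2" "S1 \<inter> S2 = {}"
        unfolding S1_def S2_def n by auto
      have "\<Prod>S2 dvd (2*m+1 choose m)"
      proof (rule primes_prod_dvd[OF fin2])
        fix p assume "p \<in> S2"
        then have p: "prime p" "m+1 < p" "p \<le> 2*m+1" unfolding S2_def by auto
        have "p dvd fact (2*m+1)" using p prime_dvd_fact_iff by blast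
        also have "fact (2*m+1) = fact m * fact (m+1) * (2*m+1 choose m)"
          using binomial_fact_lemma[of m "2*m+1"] by (simp add: add.commute)
        finally have d: "p dvd fact m * fact (m+1) * (2*m+1 choose m)" .
        have "\<not> p dvd fact m" "\<not> p dvd fact (m+1)" using p(2)
          by (subst prime_dvd_fact_iff[OF p(1)]; simp)+
        then have "p dvd (2*m+1 choose m)" using d p(1) by (metis prime_dvd_mult_iff)
        then show "prime p \<and> p dvd (2*m+1 choose m)" using p by simp
      qed
      then have "\<Prod>S2 \<le> (2*m+1 choose m)"
        by (intro dvd_imp_le) (auto simp: zero_less_binomial_iff)
      also have "\<dots> \<le> 4^m" by (rule central_binom_odd_le)
      finally have b2: "\<Prod>S2 \<le> 4^m" .
      have b1: "\<Prod>S1 \<le> 4^(m+1)" unfolding S1_def using less[of "m+1"] n m1 by simp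
      have "\<Prod>{p::nat. prime p \<and> p \<le> n} = \<Prod>S1 * \<Prod>S2"
        using split fin1 fin2 by (simp add: prod.union_disjoint)
      also have "\<dots> \<le> 4^(m+1) * 4^m" using b1 b2 by (rule mult_le_mono)
      also have "\<dots> = 4^n" using n by (simp add: power_add[symmetric])
      finally show ?thesis .
    qed
  qed
qed

lemma theta_le: "(\<Sum>p\<in>{p::nat. prime p \<and> p \<le> n}. ln (real p)) \<le> real n * ln 4"
proof -
  have pos: "\<And>p. p \<in> {p::nat. prime p \<and> p \<le> n} \<Longrightarrow> 0 < real p"
    by (auto dest: prime_gt_0_nat)
  have "(\<Sum>p\<in>{p::nat. prime p \<and> p \<le> n}. ln (real p)) = ln (\<Prod>p\<in>{p::nat. prime p \<and> p \<le> n}. real p)"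
    using pos by (subst ln_prod) auto
  also have "(\<Prod>p\<in>{p::nat. prime p \<and> p \<le> n}. real p) = real (\<Prod>{p::nat. prime p \<and> p \<le> n})"
    by simp
  also have "ln \<dots> \<le> ln (real (4^n))"
  proof (rule ln_mono)
    show "real (\<Prod>{p::nat. prime p \<and> p \<le> n}) \<le> real (4^n)"
      using primorial_le[of n] by (simp only: of_nat_le_iff)
    show "0 < real (\<Prod>{p::nat. prime p \<and> p \<le> n})"
      by (auto intro!: prod_pos dest: prime_gt_0_nat)
  qed
  also have "\<dots> = real n * ln 4" by (simp add: ln_realpow)
  finally show ?thesis .
qed



lemma hsum_rec:
  fixes z w :: complex
  shows "(\<Sum>i\<le>Suc n. z^i * w^(Suc n - i)) = z^(Suc n) + w * (\<Sum>i\<le>n. z^i * w^(n - i))"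
proof -
  have "(\<Sum>i\<le>n. z^i * w^(Suc n - i)) = (\<Sum>i\<le>n. w * (z^i * w^(n - i)))"
    by (rule sum.cong) (auto simp: Suc_diff_le)
  then show ?thesis by (simp add: sum_distrib_left add.commute)
qed

lemma hsum_cheb:
  fixes z w :: complex
  assumes "z * w = 1" "z + w = 2 * complex_of_real y"
  shows "(\<Sum>i\<le>n. z^i * w^(n - i)) = complex_of_real (chebyU n y)"
  using assms
proof (induction n y rule: chebyU.induct)
  case (1 y) then show ?case by simp
next
  case (2 y) then show ?case by (simp add: add.commute)
next
  case (3 n y)
  let ?h = "\<lambda>n. (\<Sum>i\<le>n. z^i * w^(n - i))"
  have "?h (Suc (Suc n)) = z^(Suc (Suc n)) + w * ?h (Suc n)" by (rule hsum_rec)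
  also have "z^(Suc (Suc n)) = z * z^(Suc n)" by simp
  also have "z^(Suc n) = ?h (Suc n) - w * ?h n" using hsum_rec[of z w n] by simp
  finally have "?h (Suc (Suc n)) = (z + w) * ?h (Suc n) - (z * w) * ?h n"
    by (simp add: algebra_simps)
  moreover have IH1: "?h n = complex_of_real (chebyU n y)" using 3 by blast
  moreover have IH2: "?h (Suc n) = complex_of_real (chebyU (Suc n) y)" using 3 by blast
  ultimately have "?h (Suc (Suc n)) = (2 * complex_of_real y) * complex_of_real (chebyU (Suc n) y) - 1 * complex_of_real (chebyU n y)"
    using 3(3,4) by metis
  then show ?case by simp
qed

lemma cheb_sum: "(\<Sum>i\<le>n. cis ((2 * real i - real n) * t)) = complex_of_real (chebyU n (cos t))"
proof -
  have "(\<Sum>i\<le>n. cis ((2 * real i - real n) * t)) = (\<Sum>i\<le>n. cis t ^ i * cis (-t) ^ (n - i))"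
  proof (rule sum.cong)
    fix i assume "i \<in> {..n}"
    then have "real i * t + real (n - i) * (-t) = (2 * real i - real n) * t"
      by (simp add: of_nat_diff algebra_simps)
    moreover have "cis t ^ i * cis (-t) ^ (n - i) = cis (real i * t + real (n - i) * (-t))"
      unfolding Complex.DeMoivre by (rule cis_mult)
    ultimately show "cis ((2 * real i - real n) * t) = cis t ^ i * cis (-t) ^ (n - i)"
      by metis
  qed simp
  also have "\<dots> = complex_of_real (chebyU n (cos t))"
  proof (rule hsum_cheb)
    show "cis t * cis (- t) = 1" by (simp add: cis_mult)
    show "cis t + cis (- t) = 2 * complex_of_real (cos t)"
      by (simp add: complex_eq_iff)
  qed
  finally show ?thesis .
qed



lemma chi_mod:
  assumes "dirichlet_character q chi"
  shows "chi a = chi (a mod q)"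
proof -
  have per: "\<And>b. chi (b + q) = chi b" using assms unfolding dirichlet_character_def by blast
  have "\<And>k. chi (a mod q + q * k) = chi (a mod q)"
  proof -
    fix k show "chi (a mod q + q * k) = chi (a mod q)"
    proof (induction k)
      case 0 then show ?case by simp
    next
      case (Suc k)
      have "a mod q + q * Suc k = (a mod q + q * k) + q" by simp
      then show ?case using per Suc by metis
    qed
  qed
  moreover have "a = a mod q + q * (a div q)" by simp
  ultimately show ?thesis by metis
qed

lemma chi_pow:
  assumes "dirichlet_character q chi"
  shows "chi (a ^ k) = chi a ^ k"
proof (induction k)
  case 0 then show ?case using assms unfolding dirichlet_character_def by simp
next
  case (Suc k)
  have "chi (a ^ Suc k) = chi a * chi (a ^ k)"
    using assms unfolding dirichlet_character_def by simp
  then show ?case using Suc by simp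
qed

lemma chi_norm_le:
  assumes "dirichlet_character q chi"
  shows "norm (chi a) \<le> 1"
proof (rule ccontr)
  assume "\<not> norm (chi a) \<le> 1"
  then have gt: "1 < norm (chi a)" by simp
  define B where "B = Max ((\<lambda>b. norm (chi b)) ` {..<q})"
  have q: "q > 0" using assms unfolding dirichlet_character_def by blast
  have bnd: "norm (chi b) \<le> B" for b
  proof -
    have "b mod q \<in> {..<q}" using q by simp
    then have "norm (chi (b mod q)) \<le> B" unfolding B_def by (intro Max_ge) auto
    then show ?thesis using chi_mod[OF assms, of b] by simp
  qed
  obtain k where "B < norm (chi a) ^ k" using real_arch_pow[OF gt] by blast
  also have "norm (chi a) ^ k = norm (chi (a ^ k))" using chi_pow[OF assms] by (simp add: norm_power)
  finally show False using bnd[of "a^k"] by simp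
qed

lemma sL_pp:
  assumes "prime p" "m \<ge> 1"
  shows "sym_Lambda N \<theta> lam n chi (p ^ m) = complex_of_real (ln (real p)) *
           (if p dvd N then ((complex_of_real ((- lam p / sqrt (real p)) ^ n)) * chi p) ^ m
            else (\<Sum>i\<le>n. (cis ((2 * real i - real n) * \<theta> p) * chi p) ^ m))"
proof -
  have ex: "\<exists>p' m'. prime p' \<and> m' \<ge> 1 \<and> p ^ m = p' ^ m'" using assms by blast
  have t1: "(THE p'. prime p' \<and> (\<exists>m'\<ge>1. p ^ m = p' ^ m')) = p"
  proof (rule the_equality)
    show "prime p \<and> (\<exists>m'\<ge>1. p ^ m = p ^ m')" using assms by blast
    fix p' assume "prime p' \<and> (\<exists>m'\<ge>1. p ^ m = p' ^ m')"
    then show "p' = p" using assms prime_power_inj'(1)[of p p' m] by fastforce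
  qed
  have t2: "(THE m'. m' \<ge> 1 \<and> p ^ m = p ^ m') = m"
  proof (rule the_equality)
    show "m \<ge> 1 \<and> p ^ m = p ^ m" using assms by blast
    fix m' assume "m' \<ge> 1 \<and> p ^ m = p ^ m'"
    then show "m' = m" using assms prime_power_inj[of p m m'] by simp
  qed
  show ?thesis unfolding sym_Lambda_def Let_def using ex t1 t2 by simp
qed

lemma sL_npp:
  assumes "\<not> (\<exists>p m. prime p \<and> m \<ge> 1 \<and> j = p ^ m)"
  shows "sym_Lambda N \<theta> lam n chi j = 0"
  unfolding sym_Lambda_def by (rule if_not_P[OF assms])

lemma sL_norm:
  assumes "prime p" "m \<ge> 1" "\<And>a. norm (chi a) \<le> 1"
    and "p dvd N \<Longrightarrow> lam p = 1 \<or> lam p = -1"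
  shows "norm (sym_Lambda N \<theta> lam n chi (p ^ m)) \<le> (real n + 1) * ln (real p)"
    and "p dvd N \<Longrightarrow> norm (sym_Lambda N \<theta> lam n chi (p ^ m)) \<le> ln (real p)"
proof -
  have lnp: "ln (real p) \<ge> 0" using assms(1) prime_ge_1_nat by simp
  have c1: "norm (chi p) \<le> 1" by (rule assms(3))
  have A: "norm (((complex_of_real ((- lam p / sqrt (real p)) ^ n)) * chi p) ^ m) \<le> 1" if "p dvd N"
  proof -
    have l: "\<bar>lam p\<bar> = 1" using assms(4)[OF that] by auto
    have sp: "sqrt (real p) \<ge> 1" using assms(1) prime_ge_1_nat by simp
    have "\<bar>- lam p / sqrt (real p)\<bar> \<le> 1" using l sp by (simp add: abs_div)
    then have r1: "\<bar>(- lam p / sqrt (real p)) ^ n\<bar> \<le> 1" unfolding power_abs by (intro power_le_one) simp_all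
    have "norm ((complex_of_real ((- lam p / sqrt (real p)) ^ n)) * chi p)
       = \<bar>(- lam p / sqrt (real p)) ^ n\<bar> * norm (chi p)" by (simp only: norm_mult norm_of_real)
    also have "\<dots> \<le> 1" using r1 c1 by (intro mult_le_one) auto
    finally have "norm ((complex_of_real ((- lam p / sqrt (real p)) ^ n)) * chi p) \<le> 1" .
    then show ?thesis by (simp add: norm_power power_le_one)
  qed
  have B: "norm (\<Sum>i\<le>n. (cis ((2 * real i - real n) * \<theta> p) * chi p) ^ m) \<le> real n + 1"
  proof -
    have "norm (\<Sum>i\<le>n. (cis ((2 * real i - real n) * \<theta> p) * chi p) ^ m)
          \<le> (\<Sum>i\<le>n. norm ((cis ((2 * real i - real n) * \<theta> p) * chi p) ^ m))"
      by (rule norm_sum)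
    also have "\<dots> \<le> (\<Sum>i\<le>n. 1)"
      by (rule sum_mono) (simp add: norm_power norm_mult c1 power_le_one)
    finally show ?thesis by simp
  qed
  define X where "X = ((complex_of_real ((- lam p / sqrt (real p)) ^ n)) * chi p) ^ m"
  define Y where "Y = (\<Sum>i\<le>n. (cis ((2 * real i - real n) * \<theta> p) * chi p) ^ m)"
  have nX: "norm (sym_Lambda N \<theta> lam n chi (p ^ m)) = ln (real p) * norm X" if "p dvd N"
  proof -
    have "sym_Lambda N \<theta> lam n chi (p ^ m) = complex_of_real (ln (real p)) * X"
      unfolding sL_pp[OF assms(1,2)] X_def using that by simp
    then show ?thesis using lnp by (simp only: norm_mult norm_of_real abs_of_nonneg)
  qed
  have nY: "norm (sym_Lambda N \<theta> lam n chi (p ^ m)) = ln (real p) * norm Y" if "\<not> p dvd N"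
  proof -
    have "sym_Lambda N \<theta> lam n chi (p ^ m) = complex_of_real (ln (real p)) * Y"
      unfolding sL_pp[OF assms(1,2)] Y_def using that by simp
    then show ?thesis using lnp by (simp only: norm_mult norm_of_real abs_of_nonneg)
  qed
  show "norm (sym_Lambda N \<theta> lam n chi (p ^ m)) \<le> (real n + 1) * ln (real p)"
  proof (cases "p dvd N")
    case True
    have "ln (real p) * norm X \<le> ln (real p)" using A[OF True] lnp unfolding X_def by (rule mult_left_le)
    also have "\<dots> \<le> (real n + 1) * ln (real p)"
    proof -
      have "0 \<le> real n * ln (real p)" using lnp by simp
      then show ?thesis by (simp add: algebra_simps)
    qed
    finally show ?thesis using nX[OF True] by simp
  next
    case False
    have "ln (real p) * norm Y \<le> ln (real p) * (real n + 1)" using B lnp unfolding Y_def by (rule mult_left_mono)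
    then show ?thesis using nY[OF False] by (simp add: mult.commute)
  qed
  show "norm (sym_Lambda N \<theta> lam n chi (p ^ m)) \<le> ln (real p)" if "p dvd N"
  proof -
    have "ln (real p) * norm X \<le> ln (real p)" using A[OF that] lnp unfolding X_def by (rule mult_left_le)
    then show ?thesis using nX[OF that] by simp
  qed
qed



lemma card_window:
  fixes p :: nat and a :: real
  assumes "prime p" "a > 0"
  shows "finite {m. a \<le> real (p^m) \<and> real (p^m) \<le> 5*a}"
    and "card {m. a \<le> real (p^m) \<and> real (p^m) \<le> 5*a} \<le> (if p = 2 then 3 else 2)"
proof -
  define A where "A = {m. a \<le> real (p^m) \<and> real (p^m) \<le> 5*a}"
  have p2: "p \<ge> 2" using assms(1) prime_ge_2_nat by blast
  have "A \<subseteq> {..nat \<lceil>5*a\<rceil>}"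
  proof
    fix m assume "m \<in> A"
    then have "real (p^m) \<le> 5*a" unfolding A_def by simp
    moreover have "m < p^m" using p2 by (meson less_exp less_le_trans power_increasing_iff
          one_less_numeral_iff semiring_norm(76) power_mono zero_le_numeral)
    ultimately have "real m \<le> 5 * a" by linarith
    then show "m \<in> {..nat \<lceil>5*a\<rceil>}" by (simp add: le_nat_iff) linarith
  qed
  then show fin: "finite {m. a \<le> real (p^m) \<and> real (p^m) \<le> 5*a}"
    unfolding A_def[symmetric] using finite_subset by blast
  define c :: nat where "c = (if p = 2 then 3 else 2)"
  have "card A \<le> c"
  proof (cases "A = {}")
    case True then show ?thesis by simp
  next
    case False
    define m0 where "m0 = Min A"
    have finA: "finite A" using fin unfolding A_def .
    have m0A: "m0 \<in> A" unfolding m0_def using finA False by simp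
    have "A \<subseteq> {m0..m0 + (c - 1)}"
    proof
      fix m assume mA: "m \<in> A"
      have le: "m0 \<le> m" unfolding m0_def using finA mA by simp
      define d where "d = m - m0"
      have md: "m = m0 + d" using le d_def by simp
      have pos: "real (p^m0) > 0" using p2 by simp
      have "real (p^m0) * real (p^d) = real (p^m)" by (simp add: md power_add)
      also have "\<dots> \<le> 5 * a" using mA unfolding A_def by simp
      also have "\<dots> \<le> 5 * real (p^m0)" using m0A unfolding A_def by simp
      finally have "real (p^d) \<le> 5" using pos by simp
      then have pd: "p^d \<le> 5" by linarith
      have "d \<le> c - 1"
      proof (cases "p = 2")
        case True
        { assume "d \<ge> 3"
          then have "2^3 \<le> p^d" using True by (metis power_increasing zero_less_numeral one_le_numeral)
          then have False using pd by simp }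
        then show ?thesis unfolding c_def using True by force
      next
        case False
        then have p3: "p \<ge> 3" using p2 by simp
        { assume "d \<ge> 2"
          then have "p^2 \<le> p^d" using p2 by (intro power_increasing) auto
          moreover have "3^2 \<le> p^2" using p3 by (intro power_mono) auto
          ultimately have False using pd by simp }
        then show ?thesis unfolding c_def using False by force
      qed
      then show "m \<in> {m0..m0 + (c - 1)}" using md by simp
    qed
    then have "card A \<le> card {m0..m0 + (c - 1)}" by (intro card_mono) auto
    also have "\<dots> = c" unfolding c_def by simp
    finally show ?thesis .
  qed
  then show "card {m. a \<le> real (p^m) \<and> real (p^m) \<le> 5*a} \<le> (if p = 2 then 3 else 2)"
    unfolding A_def c_def .
qed


lemma pb_pp:
  fixes p :: nat
  assumes "prime p" "m \<ge> 1"
  shows "(THE p'. prime p' \<and> (\<exists>m'\<ge>1. p ^ m = p' ^ m')) = p"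
proof (rule the_equality)
  show "prime p \<and> (\<exists>m'\<ge>1. p ^ m = p ^ m')" using assms by blast
  fix p' assume "prime p' \<and> (\<exists>m'\<ge>1. p ^ m = p' ^ m')"
  then show "p' = p" using assms prime_power_inj'(1)[of p p' m] by fastforce
qed

lemma prime_pow_prime:
  fixes p :: nat
  assumes "prime p" "prime (p ^ m)"
  shows "m = 1"
  using prime_power_inj'(2)[of p "p^m" m 1] assms
  by (metis One_nat_def gr0I not_prime_1 power_0 power_one_right prime_gt_0_nat)



theorem mainTheorem8:
  fixes N :: nat and \<theta> :: "nat \<Rightarrow> real" and lam :: "nat \<Rightarrow> real"
    and n q :: nat and chi :: "nat \<Rightarrow> complex" and \<phi> :: "real \<Rightarrow> real" and x :: real
  assumes "N > 0" and "squarefree N"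
    and "\<And>p. prime p \<Longrightarrow> \<not> p dvd N \<Longrightarrow> 0 \<le> \<theta> p \<and> \<theta> p \<le> pi"
    and "\<And>p. prime p \<Longrightarrow> p dvd N \<Longrightarrow> lam p = 1 \<or> lam p = -1"
    and "primitive_character q chi" and "coprime q N"
    and "test_function \<phi>"
    and "x > 10 ^ 6"
  shows "cmod ((\<Sum>\<^sub>\<infinity>j\<in>{1::nat..}. sym_Lambda N \<theta> lam n chi j * complex_of_real (\<phi> (real j / x)))
            - (\<Sum>\<^sub>\<infinity>p\<in>{p::nat. prime p \<and> \<not> p dvd N}.
                 complex_of_real (chebyU n (cos (\<theta> p)) * ln (real p)) * chi p
                 * complex_of_real (\<phi> (real p / x))))
         \<le> 9.06 * (real n + 1) * sqrt x + 2 * (real n + 1) * ln (real N)"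
proof -
  have Npos: "N > 0" by fact
  have lamc: "\<And>p. prime p \<Longrightarrow> p dvd N \<Longrightarrow> lam p = 1 \<or> lam p = -1" by fact
  have chin: "\<And>a. norm (chi a) \<le> 1"
    using assms(5) chi_norm_le unfolding primitive_character_def by blast
  have phi0: "\<And>t. 0 \<le> \<phi> t" and phi2: "\<And>t. \<phi> t \<le> 2"
    and phiz: "\<And>t. t \<notin> {1/2..5/2} \<Longrightarrow> \<phi> t = 0"
    using assms(7) unfolding test_function_def by auto
  have xpos: "x > 0" using assms(8) by simp
  define f1 where "f1 = (\<lambda>j::nat. sym_Lambda N \<theta> lam n chi j * complex_of_real (\<phi> (real j / x)))"
  define f2 where "f2 = (\<lambda>p::nat. complex_of_real (chebyU n (cos (\<theta> p)) * ln (real p)) * chi p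
                 * complex_of_real (\<phi> (real p / x)))"
  define M where "M = nat \<lfloor>5/2 * x\<rfloor>"
  have bigz: "\<phi> (real j / x) = 0" if "j > M" for j :: nat
  proof -
    have "real j \<ge> real M + 1" using that by simp
    moreover have "real M + 1 > 5/2 * x" unfolding M_def using xpos by linarith
    ultimately have "real j / x > 5/2" using xpos by (simp add: field_simps)
    then show ?thesis by (intro phiz) simp
  qed
  have smallz: "\<phi> (real j / x) = 0" if "real j < x / 2" for j :: nat
  proof -
    have "real j / x < 1/2" using that xpos by (simp add: field_simps)
    then show ?thesis by (intro phiz) simp
  qed
  have jM: "real j \<le> 5/2 * x" if "j \<le> M" for j :: nat
  proof -
    have "real j \<le> real M" using that by simp
    also have "real M \<le> 5/2 * x" unfolding M_def using xpos by linarith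
    finally show ?thesis .
  qed
  define Q where "Q = (\<lambda>j::nat. if prime j \<and> \<not> j dvd N then f2 j else 0)"
  have I1: "(\<Sum>\<^sub>\<infinity>j\<in>{1::nat..}. f1 j) = (\<Sum>j\<in>{1..M}. f1 j)"
  proof -
    have "(\<Sum>\<^sub>\<infinity>j\<in>{1::nat..}. f1 j) = (\<Sum>\<^sub>\<infinity>j\<in>{1..M}. f1 j)"
      by (rule infsum_cong_neutral) (auto simp: f1_def bigz)
    then show ?thesis by simp
  qed
  have I2: "(\<Sum>\<^sub>\<infinity>p\<in>{p::nat. prime p \<and> \<not> p dvd N}. f2 p) = (\<Sum>j\<in>{1..M}. Q j)"
  proof -
    have "(\<Sum>\<^sub>\<infinity>p\<in>{p::nat. prime p \<and> \<not> p dvd N}. f2 p) = (\<Sum>\<^sub>\<infinity>j\<in>{1..M}. Q j)"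
    proof (rule infsum_cong_neutral)
      fix j assume "j \<in> {p::nat. prime p \<and> \<not> p dvd N} - {1..M}"
      then have "j > M" using prime_ge_1_nat[of j] by auto
      then show "f2 j = 0" unfolding f2_def using bigz by simp
    qed (auto simp: Q_def)
    then show ?thesis by simp
  qed
  define pb where "pb = (\<lambda>j::nat. THE p. prime p \<and> (\<exists>m\<ge>1. j = p ^ m))"
  define J2 where "J2 = {j::nat. \<exists>p m. prime p \<and> m \<ge> 2 \<and> j = p ^ m \<and> x/2 \<le> real j}"
  define b1 where "b1 = (\<lambda>j::nat. if prime j \<and> j dvd N then 2 * ln (real j) else 0)"
  define b2 where "b2 = (\<lambda>j::nat. if j \<in> J2 then 2 * (real n + 1) * ln (real (pb j)) else 0)"
  have b1nn: "b1 j \<ge> 0" for j unfolding b1_def using prime_ge_1_nat[of j] by auto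
  have b2nn: "b2 j \<ge> 0" for j
  proof (cases "j \<in> J2")
    case True
    then obtain p m where pm: "prime p" "m \<ge> 2" "j = p ^ m" unfolding J2_def by blast
    then have "pb j = p" unfolding pb_def using pb_pp[of p m] by simp
    then show ?thesis unfolding b2_def using pm prime_ge_1_nat[of p] by simp
  qed (simp add: b2_def)
  have psi: "norm (complex_of_real (\<phi> t)) \<le> 2" for t using phi0[of t] phi2[of t] by simp
  have pw: "norm (f1 j - Q j) \<le> b1 j + b2 j" if jM1: "j \<in> {1..M}" for j
  proof (cases "\<exists>p m. prime p \<and> m \<ge> 1 \<and> j = p ^ m")
    case False
    then have "f1 j = 0" unfolding f1_def using sL_npp[OF False] by simp
    moreover have "Q j = 0" unfolding Q_def using False by (metis power_one_right order_refl)
    ultimately show ?thesis using b1nn[of j] b2nn[of j] by simp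
  next
    case True
    then obtain p m where pm: "prime p" "m \<ge> 1" "j = p ^ m" by blast
    have nL: "norm (sym_Lambda N \<theta> lam n chi j) \<le> (real n + 1) * ln (real p)"
      using sL_norm(1)[where chi=chi and N=N and lam=lam and \<theta>=\<theta> and n=n, OF pm(1,2) chin lamc[OF pm(1)]] pm(3) by simp
    have lnp: "0 \<le> ln (real p)" using prime_ge_1_nat[OF pm(1)] by simp
    show ?thesis
    proof (cases "m = 1")
      case True
      then have jp: "j = p" using pm by simp
      show ?thesis
      proof (cases "p dvd N")
        case True
        have "Q j = 0" unfolding Q_def using True jp by simp
        moreover have "norm (sym_Lambda N \<theta> lam n chi j) \<le> ln (real p)"
          using sL_norm(2)[where chi=chi and N=N and lam=lam and \<theta>=\<theta> and n=n, OF pm(1,2) chin lamc[OF pm(1)] True] pm(3) by simp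
        then have "norm (f1 j) \<le> ln (real p) * 2" unfolding f1_def norm_mult
          using psi lnp by (intro mult_mono) auto
        moreover have "b1 j = 2 * ln (real p)" unfolding b1_def using True jp pm(1) by simp
        ultimately show ?thesis using b2nn[of j] by simp
      next
        case False
        have "sym_Lambda N \<theta> lam n chi j = complex_of_real (ln (real p)) *
            (\<Sum>i\<le>n. cis ((2 * real i - real n) * \<theta> p) * chi p)"
          using sL_pp[OF pm(1,2), of N \<theta> lam n chi] False pm(3) True by simp
        also have "\<dots> = complex_of_real (ln (real p)) * complex_of_real (chebyU n (cos (\<theta> p))) * chi p"
          by (simp add: sum_distrib_right[symmetric] cheb_sum)
        finally have "f1 j = Q j" unfolding f1_def Q_def f2_def using False jp pm(1)
          by (simp add: mult_ac)
        then show ?thesis using b1nn[of j] b2nn[of j] by simp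
      qed
    next
      case False
      then have m2: "m \<ge> 2" using pm by simp
      have "\<not> prime j" using pm False prime_pow_prime by blast
      then have Q0: "Q j = 0" unfolding Q_def by simp
      show ?thesis
      proof (cases "x/2 \<le> real j")
        case False
        then have "f1 j = 0" unfolding f1_def using smallz[of j] by simp
        then show ?thesis using Q0 b1nn[of j] b2nn[of j] by simp
      next
        case True
        then have "j \<in> J2" unfolding J2_def using pm m2 by blast
        moreover have "pb j = p" unfolding pb_def using pb_pp[OF pm(1,2)] pm(3) by simp
        ultimately have "b2 j = 2 * (real n + 1) * ln (real p)" unfolding b2_def by simp
        moreover have "norm (f1 j) \<le> (real n + 1) * ln (real p) * 2" unfolding f1_def norm_mult
          using psi nL lnp by (intro mult_mono) auto
        ultimately show ?thesis using Q0 b1nn[of j] by (simp add: algebra_simps)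
      qed
    qed
  qed
  have S0: "norm ((\<Sum>j\<in>{1..M}. f1 j) - (\<Sum>j\<in>{1..M}. Q j)) \<le> (\<Sum>j\<in>{1..M}. b1 j) + (\<Sum>j\<in>{1..M}. b2 j)"
  proof -
    have "norm ((\<Sum>j\<in>{1..M}. f1 j) - (\<Sum>j\<in>{1..M}. Q j)) = norm (\<Sum>j\<in>{1..M}. f1 j - Q j)"
      by (simp add: sum_subtractf)
    also have "\<dots> \<le> (\<Sum>j\<in>{1..M}. norm (f1 j - Q j))" by (rule norm_sum)
    also have "\<dots> \<le> (\<Sum>j\<in>{1..M}. b1 j + b2 j)" by (rule sum_mono) (rule pw)
    finally show ?thesis by (simp add: sum.distrib)
  qed
  have B1: "(\<Sum>j\<in>{1..M}. b1 j) \<le> 2 * ln (real N)"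
  proof -
    define D where "D = {j\<in>{1..M}. prime j \<and> j dvd N}"
    have finD: "finite D" unfolding D_def by simp
    have "(\<Sum>j\<in>{1..M}. b1 j) = (\<Sum>j\<in>D. 2 * ln (real j))"
      unfolding b1_def D_def by (simp only: sum.inter_filter[OF finite_atLeastAtMost])
    also have "\<dots> = 2 * (\<Sum>j\<in>D. ln (real j))" by (simp add: sum_distrib_left)
    also have "(\<Sum>j\<in>D. ln (real j)) = ln (\<Prod>j\<in>D. real j)"
      by (subst ln_prod) (auto simp: D_def dest: prime_gt_0_nat)
    also have "(\<Prod>j\<in>D. real j) = real (\<Prod>D)" by simp
    also have "ln (real (\<Prod>D)) \<le> ln (real N)"
    proof (rule ln_mono)
      have "\<Prod>D dvd N" by (rule primes_prod_dvd[OF finD]) (auto simp: D_def)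
      then have "\<Prod>D \<le> N" using Npos by (rule dvd_imp_le)
      then show "real (\<Prod>D) \<le> real N" by (simp only: of_nat_le_iff)
      show "0 < real (\<Prod>D)" by (auto simp: D_def intro!: prod_pos dest: prime_gt_0_nat)
    qed
    finally show ?thesis by simp
  qed
  define K where "K = nat \<lfloor>sqrt (5/2 * x)\<rfloor>"
  have K: "real K \<le> sqrt (5/2 * x)" unfolding K_def using xpos by simp
  define P where "P = {p::nat. prime p \<and> p \<le> K}"
  define S where "S = {j\<in>{1..M}. j \<in> J2}"
  have finS: "finite S" and finP: "finite P" unfolding S_def P_def by auto
  have imS: "pb ` S \<subseteq> P"
  proof
    fix y assume "y \<in> pb ` S"
    then obtain j where j: "j \<in> S" "y = pb j" by blast
    then obtain p m where pm: "prime p" "m \<ge> 2" "j = p ^ m" unfolding S_def J2_def by blast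
    have "pb j = p" unfolding pb_def using pb_pp[of p m] pm by simp
    have "real (p^2) \<le> real (p^m)" using pm prime_ge_1_nat[of p] by (simp only: of_nat_le_iff) (intro power_increasing, auto)
    also have "real (p^m) \<le> 5/2 * x" using jM[of j] j(1) pm(3) unfolding S_def by simp
    finally have "(real p)^2 \<le> 5/2 * x" by simp
    then have "real p \<le> sqrt (5/2 * x)" by (simp add: real_le_rsqrt)
    then have "p \<le> K" unfolding K_def by (simp add: le_nat_floor le_floor_iff)
    then show "y \<in> P" using j \<open>pb j = p\<close> pm unfolding P_def by simp
  qed
  have fib: "card {j\<in>S. pb j = p} \<le> (if p = 2 then 3 else 2)" if "p \<in> P" for p
  proof -
    have pp: "prime p" using that unfolding P_def by simp
    have ax: "x/2 > 0" using xpos by simp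
    have "{j\<in>S. pb j = p} \<subseteq> (\<lambda>m. p^m) ` {m. x/2 \<le> real (p^m) \<and> real (p^m) \<le> 5*(x/2)}"
    proof
      fix j assume "j \<in> {j\<in>S. pb j = p}"
      then have jS: "j \<in> S" and jp: "pb j = p" by auto
      then obtain q m where qm: "prime q" "m \<ge> 2" "j = q ^ m" "x/2 \<le> real j" unfolding S_def J2_def by blast
      have "pb j = q" unfolding pb_def using pb_pp[of q m] qm by simp
      then have "q = p" using jp by simp
      moreover have "real j \<le> 5 * (x/2)" using jM[of j] jS unfolding S_def by simp
      ultimately show "j \<in> (\<lambda>m. p^m) ` {m. x/2 \<le> real (p^m) \<and> real (p^m) \<le> 5*(x/2)}"
        using qm by auto
    qed
    then have "card {j\<in>S. pb j = p} \<le> card ((\<lambda>m. p^m) ` {m. x/2 \<le> real (p^m) \<and> real (p^m) \<le> 5*(x/2)})"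
      by (intro card_mono finite_imageI card_window(1)[OF pp ax])
    also have "\<dots> \<le> card {m. x/2 \<le> real (p^m) \<and> real (p^m) \<le> 5*(x/2)}" by (rule card_image_le) (rule card_window(1)[OF pp ax])
    also have "\<dots> \<le> (if p = 2 then 3 else 2)" by (rule card_window(2)[OF pp ax])
    finally show ?thesis .
  qed
  have B2: "(\<Sum>j\<in>{1..M}. b2 j) \<le> 2 * (real n + 1) * (2 * (real K * ln 4) + ln 2)"
  proof -
    have "(\<Sum>j\<in>{1..M}. b2 j) = (\<Sum>j\<in>S. 2 * (real n + 1) * ln (real (pb j)))"
      unfolding b2_def S_def by (simp only: sum.inter_filter[OF finite_atLeastAtMost])
    also have "\<dots> = 2 * (real n + 1) * (\<Sum>j\<in>S. ln (real (pb j)))" by (simp add: sum_distrib_left)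
    also have "(\<Sum>j\<in>S. ln (real (pb j))) = (\<Sum>p\<in>P. \<Sum>j\<in>{j\<in>S. pb j = p}. ln (real (pb j)))"
      by (rule sum.group[OF finS finP imS, symmetric])
    also have "\<dots> = (\<Sum>p\<in>P. real (card {j\<in>S. pb j = p}) * ln (real p))"
      by (rule sum.cong) auto
    also have "\<dots> \<le> (\<Sum>p\<in>P. 2 * ln (real p) + (if p = 2 then ln (real p) else 0))"
    proof (rule sum_mono)
      fix p assume pP: "p \<in> P"
      have lnp: "0 \<le> ln (real p)" using pP prime_ge_1_nat unfolding P_def by simp
      have "real (card {j\<in>S. pb j = p}) \<le> (if p = 2 then 3 else 2)" using fib[OF pP] by (simp split: if_splits)
      then have "real (card {j\<in>S. pb j = p}) * ln (real p) \<le> (if p = 2 then 3 else 2) * ln (real p)"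
        using lnp by (rule mult_right_mono)
      then show "real (card {j\<in>S. pb j = p}) * ln (real p) \<le> 2 * ln (real p) + (if p = 2 then ln (real p) else 0)"
        by (simp split: if_splits)
    qed
    also have "\<dots> = 2 * (\<Sum>p\<in>P. ln (real p)) + (\<Sum>p\<in>P. if p = 2 then ln (real p) else 0)"
      by (simp add: sum.distrib sum_distrib_left)
    also have "(\<Sum>p\<in>P. if p = 2 then ln (real p) else 0) \<le> ln 2"
      using finP by (simp add: sum.delta)
    also have "(\<Sum>p\<in>P. ln (real p)) \<le> real K * ln 4" unfolding P_def by (rule theta_le)
    finally show ?thesis by (simp add: mult_left_mono)
  qed
  have sx: "sqrt x \<ge> 1000"
  proof -
    have "sqrt ((1000::real)^2) \<le> sqrt x" using assms(8) by (intro real_sqrt_le_mono) simp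
    then show ?thesis by simp
  qed
  have s52: "sqrt (5/2::real) \<le> 1.5812"
  proof -
    have "sqrt (5/2::real) \<le> sqrt (1.5812^2)" by (intro real_sqrt_le_mono) (simp add: power2_eq_square)
    then show ?thesis by simp
  qed
  have KL: "real K * ln 4 \<le> (1.5812 * sqrt x) * 1.43"
  proof (rule mult_mono)
    have "sqrt (5/2 * x) = sqrt (5/2) * sqrt x" by (rule real_sqrt_mult)
    then have "real K \<le> sqrt (5/2) * sqrt x" using K by simp
    also have "\<dots> \<le> 1.5812 * sqrt x" using s52 xpos by (intro mult_right_mono) auto
    finally show "real K \<le> 1.5812 * sqrt x" .
    show "ln 4 \<le> (1.43::real)" by (rule ln4_le)
  qed (use xpos in auto)
  have ln2: "ln (2::real) \<le> 1" using ln_2_less_1 by simp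
  have KL2: "real K * ln 4 \<le> 2.261116 * sqrt x" using KL by simp
  have inner: "2 * (real K * ln 4) + ln 2 \<le> 4.53 * sqrt x"
    using KL2 ln2 sx by simp
  have lnN: "0 \<le> ln (real N)" using Npos by simp
  have "cmod ((\<Sum>\<^sub>\<infinity>j\<in>{1::nat..}. f1 j) - (\<Sum>\<^sub>\<infinity>p\<in>{p::nat. prime p \<and> \<not> p dvd N}. f2 p))
        \<le> 2 * ln (real N) + 2 * (real n + 1) * (2 * (real K * ln 4) + ln 2)"
    unfolding I1 I2 using S0 B1 B2 by linarith
  also have "\<dots> \<le> 2 * (real n + 1) * ln (real N) + 2 * (real n + 1) * (4.53 * sqrt x)"
  proof (rule add_mono)
    show "2 * ln (real N) \<le> 2 * (real n + 1) * ln (real N)" using lnN by (simp add: algebra_simps)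
    show "2 * (real n + 1) * (2 * (real K * ln 4) + ln 2) \<le> 2 * (real n + 1) * (4.53 * sqrt x)"
      using inner by (intro mult_left_mono) auto
  qed
  also have "\<dots> = 9.06 * (real n + 1) * sqrt x + 2 * (real n + 1) * ln (real N)"
    by (simp add: algebra_simps)
  finally show ?thesis unfolding f1_def f2_def .
qed


end
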